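(* Let $V\subseteq\mathbb{R}^n$ be convex, $F\colon V\to\mathbb{R}^n$ globally Lipschitz, and define $\tilde F\colon V^N\to\mathbb{R}^{nN}$ by $\tilde F(u)=(F(u_1)^T,\dots,F(u_N)^T)^T$ for $u=(u_1^T,\dots,u_N^T)^T$, $u_i\in V$. Let $D=\operatorname{diag}(d_1,\dots,d_n)$ with $d_i>0$, and let $L\in\mathbb{R}^{N\times N}$ be a graph Laplacian: symmetric, with nonpositive off-diagonal entries, and $L\mathbf{1}=0$. Fix $1\le p\le\infty$ and a positive diagonal $n\times n$ matrix $Q$, and let $c=M_{p,Q}[F]$. Then for any two continuously differentiable solutions $u,v\colon[0,\infty)\to V^N$ of \[ \dot u(t)=\tilde F(u(t))-(L\otimes D)u(t), \] we have $\|u(t)-v(t)\|_{p,Q}\le e^{ct}\|u(0)-v(0)\|_{p,Q}$ for all $t\ge0$.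
   Context: On $\mathbb{R}^n$, $\|x\|_{p,Q}=\|Qx\|_p$; on $\mathbb{R}^{nN}$, $\|u\|_{p,Q}=\big\|(\|Qu_1\|_p,\dots,\|Qu_N\|_p)^T\big\|_p$. The logarithmic Lipschitz constant is $M_{p,Q}[F]=\lim_{h\to0^+}\sup_{x\neq y\in V}\frac1h\left(\frac{\|x-y+h(F(x)-F(y))\|_{p,Q}}{\|x-y\|_{p,Q}}-1\right)$. $\mathbf{1}=(1,\dots,1)^T$ and $\otimes$ is the Kronecker product. *)

theory Defs
  imports "HOL-Analysis.Analysis" "HOL-Library.Extended_Real"
begin

definition pnorm :: "ereal \<Rightarrow> real^'a \<Rightarrow> real" where
  "pnorm p x = (if p = \<infinity> then Max (range (\<lambda>i. \<bar>x $ i\<bar>))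
                else (\<Sum>i\<in>UNIV. \<bar>x $ i\<bar> powr real_of_ereal p) powr (1 / real_of_ereal p))"

definition normPQ :: "ereal \<Rightarrow> real^'n^'n \<Rightarrow> real^'n \<Rightarrow> real" where
  "normPQ p Q x = pnorm p (Q *v x)"

text \<open>Weighted norm on R^{nN}, u = (u_1,...,u_N) with u_k \<in> R^n.\<close>
definition normPQ_block :: "ereal \<Rightarrow> real^'n^'n \<Rightarrow> (real^'n)^'N \<Rightarrow> real" where
  "normPQ_block p Q u = pnorm p (\<chi> k. normPQ p Q (u $ k))"

definition logLip :: "ereal \<Rightarrow> real^'n^'n \<Rightarrow> (real^'n) set \<Rightarrow> (real^'n \<Rightarrow> real^'n) \<Rightarrow> real" where
  "logLip p Q V F = Lim (at_right 0)
     (\<lambda>h. SUP xy \<in> {(x, y). x \<in> V \<and> y \<in> V \<and> x \<noteq> y}.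
        (1 / h) * (normPQ p Q (fst xy - snd xy + h *\<^sub>R (F (fst xy) - F (snd xy)))
                    / normPQ p Q (fst xy - snd xy) - 1))"

definition Ftilde :: "(real^'n \<Rightarrow> real^'n) \<Rightarrow> (real^'n)^'N \<Rightarrow> (real^'n)^'N" where
  "Ftilde F u = (\<chi> k. F (u $ k))"

definition kron_apply :: "real^'N^'N \<Rightarrow> real^'n^'n \<Rightarrow> (real^'n)^'N \<Rightarrow> (real^'n)^'N" where
  "kron_apply L D u = (\<chi> k. \<Sum>j\<in>UNIV. (L $ k $ j) *\<^sub>R (D *v (u $ j)))"

definition pos_diag :: "real^'n^'n \<Rightarrow> bool" where
  "pos_diag A \<longleftrightarrow> (\<forall>i j. i \<noteq> j \<longrightarrow> A $ i $ j = 0) \<and> (\<forall>i. A $ i $ i > 0)"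

definition graph_laplacian :: "real^'N^'N \<Rightarrow> bool" where
  "graph_laplacian L \<longleftrightarrow> transpose L = L \<and> (\<forall>i j. i \<noteq> j \<longrightarrow> L $ i $ j \<le> 0)
      \<and> L *v (\<chi> i. 1) = 0"

definition is_solution ::
  "(real^'n \<Rightarrow> real^'n) \<Rightarrow> real^'N^'N \<Rightarrow> real^'n^'n \<Rightarrow> (real^'n) set \<Rightarrow> (real \<Rightarrow> (real^'n)^'N) \<Rightarrow> bool" where
  "is_solution F L D V u \<longleftrightarrow>
     (\<forall>t\<ge>0. \<forall>k. u t $ k \<in> V) \<and>
     (\<exists>u'. (\<forall>t\<ge>0. (u has_vector_derivative u' t) (at t within {0..}))
           \<and> continuous_on {0..} u'
           \<and> (\<forall>t\<ge>0. u' t = Ftilde F (u t) - kron_apply L D (u t)))"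

end

theory Submission
  imports Defs
begin

lemma pfin: "1 \<le> p \<Longrightarrow> p \<noteq> \<infinity> \<Longrightarrow> p = ereal (real_of_ereal p) \<and> 1 \<le> real_of_ereal p"
  by (cases p) auto

lemma pnorm_inf_char:
  fixes x :: "real^'a"
  shows "\<exists>i. pnorm \<infinity> x = \<bar>x$i\<bar>" "\<bar>x$i\<bar> \<le> pnorm \<infinity> x"
proof -
  have f: "finite (range (\<lambda>i. \<bar>x$i\<bar>))" by simp
  have "Max (range (\<lambda>i. \<bar>x$i\<bar>)) \<in> range (\<lambda>i. \<bar>x$i\<bar>)" by (rule Max_in[OF f]) simp
  then obtain j where "Max (range (\<lambda>i. \<bar>x$i\<bar>)) = \<bar>x$j\<bar>" by blast
  then show "\<exists>i. pnorm \<infinity> x = \<bar>x$i\<bar>" unfolding pnorm_def by auto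
  show "\<bar>x$i\<bar> \<le> pnorm \<infinity> x" by (simp add: pnorm_def)
qed

lemma pnorm_inf_le:
  fixes x :: "real^'a"
  assumes "\<And>i. \<bar>x$i\<bar> \<le> M" shows "pnorm \<infinity> x \<le> M"
  using pnorm_inf_char(1)[of x] assms by auto

lemma pnorm_fin: "1 \<le> p \<Longrightarrow> p \<noteq> \<infinity> \<Longrightarrow>
   pnorm p x = (\<Sum>i\<in>UNIV. \<bar>x $ i\<bar> powr real_of_ereal p) powr (1 / real_of_ereal p)"
  by (simp add: pnorm_def)

lemma pnorm_finP: "1 \<le> p \<Longrightarrow> p \<noteq> \<infinity> \<Longrightarrow> P = real_of_ereal p \<Longrightarrow>
   pnorm p x = (\<Sum>i\<in>UNIV. \<bar>x $ i\<bar> powr P) powr (1 / P)"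
  by (simp add: pnorm_def)

lemma pnorm_nonneg[simp]: "0 \<le> pnorm p x"
proof (cases "p = \<infinity>")
  case True then show ?thesis using pnorm_inf_char(2)[of x] by (meson abs_ge_zero order_trans)
next
  case False then show ?thesis by (simp add: pnorm_def)
qed

lemma pnorm_pow:
  assumes "1 \<le> p" "p \<noteq> \<infinity>"
  shows "pnorm p x powr real_of_ereal p = (\<Sum>i\<in>UNIV. \<bar>x $ i\<bar> powr real_of_ereal p)"
proof -
  have P: "1 \<le> real_of_ereal p" using pfin[OF assms] by simp
  have "pnorm p x powr real_of_ereal p = (\<Sum>i\<in>UNIV. \<bar>x $ i\<bar> powr real_of_ereal p) powr 1"
    using P by (simp add: pnorm_fin[OF assms] powr_powr)
  also have "\<dots> = (\<Sum>i\<in>UNIV. \<bar>x $ i\<bar> powr real_of_ereal p)"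
    by (rule powr_one) (simp add: sum_nonneg)
  finally show ?thesis .
qed

lemma pnorm_ge_comp:
  assumes "1 \<le> p" shows "\<bar>x$i\<bar> \<le> pnorm p x"
proof (cases "p = \<infinity>")
  case True then show ?thesis using pnorm_inf_char(2) by simp
next
  case False
  define P where "P = real_of_ereal p"
  have P: "1 \<le> P" using pfin[OF assms False] P_def by simp
  have "\<bar>x$i\<bar> = (\<bar>x$i\<bar> powr P) powr (1/P)" using P by (simp add: powr_powr)
  also have "\<dots> \<le> (\<Sum>j\<in>UNIV. \<bar>x $ j\<bar> powr P) powr (1/P)"
    using P by (intro powr_mono2) (auto intro!: member_le_sum)
  finally show ?thesis by (simp add: pnorm_finP[OF assms False P_def])
qed

lemma pnorm_mono:
  assumes "1 \<le> p" "\<And>i. \<bar>x$i\<bar> \<le> \<bar>y$i\<bar>" shows "pnorm p x \<le> pnorm p y"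
proof (cases "p = \<infinity>")
  case True then show ?thesis
    using pnorm_inf_char[of y] assms(2) by (auto intro!: pnorm_inf_le order_trans[OF assms(2)])
next
  case False
  define P where "P = real_of_ereal p"
  have P: "1 \<le> P" using pfin[OF assms(1) False] P_def by simp
  have "(\<Sum>j\<in>UNIV. \<bar>x $ j\<bar> powr P) powr (1/P) \<le> (\<Sum>j\<in>UNIV. \<bar>y $ j\<bar> powr P) powr (1/P)"
    using P assms(2) by (intro powr_mono2 sum_mono) (auto intro!: sum_nonneg)
  then show ?thesis by (simp add: pnorm_finP[OF assms(1) False P_def])
qed

lemma pnorm_zero: assumes "1 \<le> p" shows "pnorm p 0 = 0"
proof (cases "p = \<infinity>")
  case True then show ?thesis using pnorm_inf_char(1)[of 0] by auto
next
  case False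
  have P: "1 \<le> real_of_ereal p" using pfin[OF assms False] by simp
  then show ?thesis by (simp add: pnorm_finP[OF assms False refl])
qed

lemma pnorm_eq0: "1 \<le> p \<Longrightarrow> pnorm p x = 0 \<longleftrightarrow> x = 0"
proof
  assume "1 \<le> p" "pnorm p x = 0"
  then show "x = 0" using pnorm_ge_comp[of p x] by (auto simp: vec_eq_iff)
qed (simp add: pnorm_zero)

lemma pnorm_scale:
  assumes "1 \<le> p" shows "pnorm p (a *\<^sub>R x) = \<bar>a\<bar> * pnorm p x"
proof (cases "p = \<infinity>")
  case True
  obtain i where i: "pnorm \<infinity> x = \<bar>x$i\<bar>" using pnorm_inf_char(1) by blast
  obtain j where j: "pnorm \<infinity> (a *\<^sub>R x) = \<bar>(a *\<^sub>R x)$j\<bar>" using pnorm_inf_char(1) by blast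
  have "\<bar>(a *\<^sub>R x)$j\<bar> \<le> \<bar>a\<bar> * \<bar>x$i\<bar>"
    using pnorm_inf_char(2)[of x j] i by (simp add: abs_mult mult_left_mono)
  moreover have "\<bar>a\<bar> * \<bar>x$i\<bar> \<le> \<bar>(a *\<^sub>R x)$j\<bar>"
    using pnorm_inf_char(2)[of "a *\<^sub>R x" i] j by (simp add: abs_mult)
  ultimately show ?thesis using i j True by simp
next
  case False
  define P where "P = real_of_ereal p"
  have P: "1 \<le> P" using pfin[OF assms False] P_def by simp
  have "(\<Sum>j\<in>UNIV. \<bar>(a *\<^sub>R x) $ j\<bar> powr P) = \<bar>a\<bar> powr P * (\<Sum>j\<in>UNIV. \<bar>x $ j\<bar> powr P)"
    by (simp add: abs_mult powr_mult sum_distrib_left)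
  then have "(\<Sum>j\<in>UNIV. \<bar>(a *\<^sub>R x) $ j\<bar> powr P) powr (1/P)
      = (\<bar>a\<bar> powr P) powr (1/P) * (\<Sum>j\<in>UNIV. \<bar>x $ j\<bar> powr P) powr (1/P)"
    by (simp add: powr_mult)
  also have "(\<bar>a\<bar> powr P) powr (1/P) = \<bar>a\<bar>" using P by (simp add: powr_powr)
  finally show ?thesis by (simp add: pnorm_finP[OF assms False P_def])
qed

lemma powr_convex0:
  fixes a b u v P :: real
  assumes "0 \<le> a" "0 \<le> b" "0 \<le> u" "0 \<le> v" "u + v = 1" "1 \<le> P"
  shows "(u * a + v * b) powr P \<le> u * a powr P + v * b powr P"
proof -
  have vle: "v powr P \<le> v" and ule: "u powr P \<le> u"
  proof -
    have "v \<le> 1" "u \<le> 1" using assms by auto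
    then show "v powr P \<le> v" "u powr P \<le> u"
      using assms powr_mono'[of 1 P v] powr_mono'[of 1 P u] by (auto simp: powr_one)
  qed
  show ?thesis
  proof (cases "a = 0")
    case True
    then have "(u * a + v * b) powr P = v powr P * b powr P" by (simp add: powr_mult)
    also have "\<dots> \<le> v * b powr P" using vle by (intro mult_right_mono) auto
    finally show ?thesis using True by simp
  next
    case a: False
    show ?thesis
    proof (cases "b = 0")
      case True
      then have "(u * a + v * b) powr P = u powr P * a powr P" by (simp add: powr_mult)
      also have "\<dots> \<le> u * a powr P" using ule by (intro mult_right_mono) auto
      finally show ?thesis using True by simp
    next
      case False
      have "convex_on {0<..} (\<lambda>x::real. x powr P)" using powr_convex assms by simp
      have u1: "1 - v = u" using assms by simp
      have "v \<le> 1" using assms by simp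
      from convex_onD[OF \<open>convex_on {0<..} (\<lambda>x::real. x powr P)\<close> _ this, of a b] a False assms
      show ?thesis unfolding u1 by (simp add: order_le_less)
    qed
  qed
qed

lemma abs_powr_convex:
  fixes a b u v P :: real
  assumes "0 \<le> u" "0 \<le> v" "u + v = 1" "1 \<le> P"
  shows "\<bar>u * a + v * b\<bar> powr P \<le> u * \<bar>a\<bar> powr P + v * \<bar>b\<bar> powr P"
proof -
  have "\<bar>u * a + v * b\<bar> \<le> u * \<bar>a\<bar> + v * \<bar>b\<bar>"
    using assms by (metis abs_mult abs_of_nonneg abs_triangle_ineq)
  then have "\<bar>u * a + v * b\<bar> powr P \<le> (u * \<bar>a\<bar> + v * \<bar>b\<bar>) powr P"
    using assms by (intro powr_mono2) auto
  also have "\<dots> \<le> u * \<bar>a\<bar> powr P + v * \<bar>b\<bar> powr P"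
    using assms by (intro powr_convex0) auto
  finally show ?thesis .
qed

lemma abs_powr_convex_on:
  fixes P :: real assumes "1 \<le> P" shows "convex_on UNIV (\<lambda>t. \<bar>t\<bar> powr P)"
  unfolding convex_on_def using abs_powr_convex[OF _ _ _ assms] by simp

lemma pnorm_triangle:
  fixes x y :: "real^'a"
  assumes "1 \<le> p" shows "pnorm p (x + y) \<le> pnorm p x + pnorm p y"
proof (cases "p = \<infinity>")
  case True
  obtain i where i: "pnorm \<infinity> (x+y) = \<bar>(x+y)$i\<bar>" using pnorm_inf_char(1) by blast
  have "\<bar>(x+y)$i\<bar> \<le> \<bar>x$i\<bar> + \<bar>y$i\<bar>" by (simp add: abs_triangle_ineq)
  also have "\<dots> \<le> pnorm p x + pnorm p y"
    using pnorm_ge_comp[OF assms] by (intro add_mono) auto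
  finally show ?thesis using i True by simp
next
  case False
  define P where "P = real_of_ereal p"
  have P: "1 \<le> P" using pfin[OF assms False] P_def by simp
  define G where "G = (\<lambda>z::real^'a. \<Sum>i\<in>UNIV. \<bar>z $ i\<bar> powr P)"
  have N: "pnorm p z = G z powr (1/P)" for z by (simp add: pnorm_finP[OF assms False P_def] G_def)
  have NP: "pnorm p z powr P = G z" for z using pnorm_pow[OF assms False] by (simp add: P_def G_def)
  define A where "A = pnorm p x"
  define B where "B = pnorm p y"
  show ?thesis
  proof (cases "A = 0 \<or> B = 0")
    case True
    then have "x = 0 \<or> y = 0" using pnorm_eq0[OF assms] A_def B_def by auto
    then show ?thesis
    proof
      assume "x = 0" then show ?thesis using True A_def B_def by (simp add: pnorm_zero[OF assms])
    next
      assume "y = 0" then show ?thesis using True A_def B_def by (simp add: pnorm_zero[OF assms])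
    qed
  next
    case False
    have A: "A > 0" and B: "B > 0" using False pnorm_nonneg A_def B_def by (auto simp: order_le_less)
    have AB: "A + B \<noteq> 0" using A B by simp
    define u where "u = A/(A+B)"
    define v where "v = B/(A+B)"
    have uv: "0 \<le> u" "0 \<le> v" "u + v = 1" using A B AB by (auto simp: u_def v_def add_divide_distrib[symmetric])
    have comp: "(x+y)$i / (A+B) = u * (x$i/A) + v * (y$i/B)" for i
    proof -
      have "u * (x$i/A) = x$i/(A+B)" "v * (y$i/B) = y$i/(A+B)" using A B by (auto simp: u_def v_def)
      then show ?thesis by (simp add: add_divide_distrib)
    qed
    have "G (x+y) / (A+B) powr P = (\<Sum>i\<in>UNIV. \<bar>(x+y)$i / (A+B)\<bar> powr P)"
      using A B by (simp add: G_def sum_divide_distrib powr_divide)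
    also have "\<dots> \<le> (\<Sum>i\<in>UNIV. u * \<bar>x$i/A\<bar> powr P + v * \<bar>y$i/B\<bar> powr P)"
      unfolding comp by (intro sum_mono abs_powr_convex uv P)
    also have "\<dots> = u * (G x / A powr P) + v * (G y / B powr P)"
      using A B by (simp add: G_def sum.distrib sum_distrib_left sum_divide_distrib powr_divide)
    also have "\<dots> = 1"
    proof -
      have "A powr P = G x" "B powr P = G y" using NP[of x] NP[of y] by (simp_all add: A_def B_def)
      moreover have "A powr P > 0" "B powr P > 0" using A B by auto
      ultimately show ?thesis using uv by simp
    qed
    finally have "G (x+y) \<le> (A+B) powr P" using A B by (simp add: divide_le_eq)
    then have "G (x+y) powr (1/P) \<le> ((A+B) powr P) powr (1/P)"
      using P by (intro powr_mono2) (auto simp: G_def intro!: sum_nonneg)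
    also have "\<dots> = A + B" using A B P by (simp add: powr_powr)
    finally show ?thesis using N A_def B_def by simp
  qed
qed

lemma pnorm_diff_le:
  fixes x y :: "real^'a"
  assumes "1 \<le> p" shows "\<bar>pnorm p x - pnorm p y\<bar> \<le> pnorm p (x - y)"
proof -
  have "pnorm p x \<le> pnorm p (x - y) + pnorm p y" using pnorm_triangle[OF assms, of "x-y" y] by simp
  moreover have "pnorm p y \<le> pnorm p (y - x) + pnorm p x" using pnorm_triangle[OF assms, of "y-x" x] by simp
  moreover have "pnorm p (y - x) = pnorm p (x - y)" using pnorm_scale[OF assms, of "-1" "x-y"] by simp
  ultimately show ?thesis by linarith
qed

lemma pnorm_sum:
  fixes f :: "'b \<Rightarrow> real^'a"
  assumes "1 \<le> p" shows "pnorm p (\<Sum>i\<in>S. f i) \<le> (\<Sum>i\<in>S. pnorm p (f i))"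
proof (induction S rule: infinite_finite_induct)
  case (insert x F)
  then show ?case using pnorm_triangle[OF assms, of "f x" "\<Sum>i\<in>F. f i"] by simp
qed (auto simp: pnorm_zero[OF assms])

lemma pnorm_single:
  assumes "1 \<le> p" shows "pnorm p ((\<chi> j. if j = i then c else 0) :: real^'a) = \<bar>c\<bar>"
proof (cases "p = \<infinity>")
  case True
  have "pnorm p ((\<chi> j. if j = i then c else 0) :: real^'a) \<le> \<bar>c\<bar>"
    using True by (intro pnorm_inf_le[simplified True[symmetric]]) auto
  moreover have "\<bar>((\<chi> j. if j = i then c else 0) :: real^'a) $ i\<bar> \<le> pnorm p ((\<chi> j. if j = i then c else 0) :: real^'a)"
    by (rule pnorm_ge_comp[OF assms])
  ultimately show ?thesis by simp
next
  case False
  have P: "1 \<le> real_of_ereal p" using pfin[OF assms False] by simp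
  have "(\<Sum>j\<in>UNIV. \<bar>((\<chi> j. if j = i then c else 0) :: real^'a) $ j\<bar> powr real_of_ereal p)
        = \<bar>c\<bar> powr real_of_ereal p"
  proof -
    have "\<And>j. \<bar>((\<chi> j. if j = i then c else 0) :: real^'a) $ j\<bar> powr real_of_ereal p
       = (if j = i then \<bar>c\<bar> powr real_of_ereal p else 0)" by auto
    then show ?thesis by simp
  qed
  then show ?thesis using P by (simp add: pnorm_finP[OF assms False refl] powr_powr)
qed

lemma pnorm_le_l1:
  fixes x :: "real^'a"
  assumes "1 \<le> p" shows "pnorm p x \<le> (\<Sum>i\<in>UNIV. \<bar>x$i\<bar>)"
proof -
  have x: "x = (\<Sum>i\<in>UNIV. (\<chi> j. if j = i then x$i else 0))"
    by (simp add: vec_eq_iff sum_component)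
  have "pnorm p x \<le> (\<Sum>i\<in>UNIV. pnorm p ((\<chi> j. if j = i then x$i else 0) :: real^'a))"
    by (subst x) (rule pnorm_sum[OF assms])
  then show ?thesis by (simp add: pnorm_single[OF assms])
qed

lemma mv_comp: "(A *v x) $ i = (\<Sum>j\<in>UNIV. A$i$j * x$j)"
  by (simp add: matrix_vector_mult_def)

lemma diag_mult: assumes "pos_diag Q" shows "(Q *v x) $ i = Q$i$i * x$i"
proof -
  have "(\<Sum>j\<in>UNIV. Q$i$j * x$j) = (\<Sum>j\<in>UNIV. if j = i then Q$i$i * x$i else 0)"
    using assms by (intro sum.cong) (auto simp: pos_diag_def)
  then show ?thesis by (simp add: mv_comp)
qed

lemma normPQ_nonneg[simp]: "0 \<le> normPQ p Q x" by (simp add: normPQ_def)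

lemma normPQ_triangle: "1 \<le> p \<Longrightarrow> normPQ p Q (x + y) \<le> normPQ p Q x + normPQ p Q y"
  by (simp add: normPQ_def matrix_vector_right_distrib pnorm_triangle)

lemma normPQ_scale: "1 \<le> p \<Longrightarrow> normPQ p Q (a *\<^sub>R x) = \<bar>a\<bar> * normPQ p Q x"
  by (simp add: normPQ_def matrix_vector_mult_scaleR pnorm_scale)

lemma normPQ_zero: "1 \<le> p \<Longrightarrow> normPQ p Q 0 = 0"
  by (simp add: normPQ_def pnorm_zero)

lemma normPQ_minus: "1 \<le> p \<Longrightarrow> normPQ p Q (x - y) = normPQ p Q (y - x)"
  using normPQ_scale[of p Q "-1" "x - y"] by simp

lemma normPQ_upper:
  assumes "1 \<le> p" shows "normPQ p Q z \<le> (\<Sum>i\<in>UNIV. \<Sum>l\<in>UNIV. \<bar>Q$i$l\<bar>) * norm z"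
proof -
  have "normPQ p Q z \<le> (\<Sum>i\<in>UNIV. \<bar>(Q *v z)$i\<bar>)" unfolding normPQ_def by (rule pnorm_le_l1[OF assms])
  also have "\<dots> \<le> (\<Sum>i\<in>UNIV. \<Sum>l\<in>UNIV. \<bar>Q$i$l\<bar> * norm z)"
  proof (rule sum_mono)
    fix i
    have "\<bar>(Q *v z)$i\<bar> \<le> (\<Sum>l\<in>UNIV. \<bar>Q$i$l * z$l\<bar>)" unfolding mv_comp by (rule sum_abs)
    also have "\<dots> \<le> (\<Sum>l\<in>UNIV. \<bar>Q$i$l\<bar> * norm z)"
      by (intro sum_mono) (simp add: abs_mult mult_left_mono component_le_norm_cart)
    finally show "\<bar>(Q *v z)$i\<bar> \<le> (\<Sum>l\<in>UNIV. \<bar>Q$i$l\<bar> * norm z)" .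
  qed
  also have "\<dots> = (\<Sum>i\<in>UNIV. \<Sum>l\<in>UNIV. \<bar>Q$i$l\<bar>) * norm z" by (simp add: sum_distrib_right)
  finally show ?thesis .
qed

lemma normPQ_lower:
  assumes "1 \<le> p" "pos_diag Q" shows "norm z \<le> (\<Sum>i\<in>UNIV. 1 / Q$i$i) * normPQ p Q z"
proof -
  have q: "Q$i$i > 0" for i using assms by (auto simp: pos_diag_def)
  have "norm z \<le> (\<Sum>i\<in>UNIV. \<bar>z$i\<bar>)" by (rule norm_le_l1_cart)
  also have "\<dots> \<le> (\<Sum>i\<in>UNIV. 1 / Q$i$i * normPQ p Q z)"
  proof (rule sum_mono)
    fix i
    have "\<bar>(Q *v z)$i\<bar> \<le> normPQ p Q z" unfolding normPQ_def by (rule pnorm_ge_comp[OF assms(1)])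
    then have "Q$i$i * \<bar>z$i\<bar> \<le> normPQ p Q z" using q[of i] by (simp add: diag_mult[OF assms(2)] abs_mult)
    then show "\<bar>z$i\<bar> \<le> 1 / Q$i$i * normPQ p Q z" using q[of i] by (simp add: field_simps)
  qed
  also have "\<dots> = (\<Sum>i\<in>UNIV. 1 / Q$i$i) * normPQ p Q z" by (simp add: sum_distrib_right)
  finally show ?thesis .
qed

lemma normPQ_pos: assumes "1 \<le> p" "pos_diag Q" "z \<noteq> 0" shows "normPQ p Q z > 0"
proof -
  have "norm z > 0" using assms by simp
  then show ?thesis using normPQ_lower[OF assms(1,2), of z] normPQ_nonneg[of p Q z]
    by (metis less_eq_real_def mult_zero_right not_le)
qed

lemma pnorm_le_scale:
  fixes x y :: "real^'a"
  assumes "1 \<le> p" "\<And>k. 0 \<le> x$k" "\<And>k. 0 \<le> y$k" "\<And>k. x$k \<le> a * y$k"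
  shows "pnorm p x \<le> a * pnorm p y"
proof (cases "a \<ge> 0")
  case True
  have "pnorm p x \<le> pnorm p (a *\<^sub>R y)"
    using assms True by (intro pnorm_mono) (auto intro: order_trans[OF _ assms(4)])
  then show ?thesis using True by (simp add: pnorm_scale[OF assms(1)])
next
  case False
  have "y$k = 0 \<and> x$k = 0" for k
  proof -
    have "a * y$k \<le> 0" using False assms(3)[of k] by (simp add: mult_nonpos_nonneg)
    then have "x$k = 0" "a * y$k = 0" using assms(2,4)[of k] by linarith+
    then show ?thesis using False by simp
  qed
  then have "x = 0" "y = 0" by (auto simp: vec_eq_iff)
  then show ?thesis by (simp add: pnorm_zero[OF assms(1)])
qed

lemma NB_nonneg[simp]: "0 \<le> normPQ_block p Q u" by (simp add: normPQ_block_def)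

lemma NB_triangle:
  assumes "1 \<le> p" shows "normPQ_block p Q (u + v) \<le> normPQ_block p Q u + normPQ_block p Q v"
proof -
  have "normPQ_block p Q (u + v) \<le> pnorm p ((\<chi> k. normPQ p Q (u$k)) + (\<chi> k. normPQ p Q (v$k)))"
    unfolding normPQ_block_def
    by (intro pnorm_mono[OF assms]) (auto intro: order_trans[OF _ normPQ_triangle[OF assms]])
  also have "\<dots> \<le> normPQ_block p Q u + normPQ_block p Q v"
    unfolding normPQ_block_def by (rule pnorm_triangle[OF assms])
  finally show ?thesis .
qed

lemma NB_scale:
  assumes "1 \<le> p" shows "normPQ_block p Q (a *\<^sub>R u) = \<bar>a\<bar> * normPQ_block p Q u"
proof -
  have "(\<chi> k. normPQ p Q ((a *\<^sub>R u)$k)) = \<bar>a\<bar> *\<^sub>R (\<chi> k. normPQ p Q (u$k))"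
    by (simp add: vec_eq_iff normPQ_scale[OF assms])
  then show ?thesis unfolding normPQ_block_def by (simp add: pnorm_scale[OF assms])
qed

lemma NB_zero: "1 \<le> p \<Longrightarrow> normPQ_block p Q 0 = 0"
proof -
  assume a: "1 \<le> p"
  have "(\<chi> k. normPQ p Q ((0::(real^'a)^'b)$k)) = 0" by (simp add: vec_eq_iff normPQ_zero[OF a])
  then show ?thesis unfolding normPQ_block_def by (simp add: pnorm_zero[OF a])
qed

lemma NB_upper:
  fixes u :: "(real^'n)^'N"
  assumes "1 \<le> p"
  shows "normPQ_block p Q u \<le> (real CARD('N) * (\<Sum>i\<in>UNIV. \<Sum>l\<in>UNIV. \<bar>Q$i$l\<bar>)) * norm u"
proof -
  have "normPQ_block p Q u \<le> (\<Sum>k\<in>UNIV. \<bar>normPQ p Q (u$k)\<bar>)"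
    unfolding normPQ_block_def by (rule order_trans[OF pnorm_le_l1[OF assms]]) simp
  also have "\<dots> \<le> (\<Sum>k\<in>(UNIV::'N set). (\<Sum>i\<in>UNIV. \<Sum>l\<in>UNIV. \<bar>Q$i$l\<bar>) * norm u)"
  proof (rule sum_mono)
    fix k
    have "(\<Sum>i\<in>UNIV. \<Sum>l\<in>UNIV. \<bar>Q$i$l\<bar>) * norm (u$k) \<le> (\<Sum>i\<in>UNIV. \<Sum>l\<in>UNIV. \<bar>Q$i$l\<bar>) * norm u"
      by (intro mult_left_mono) (auto intro: sum_nonneg simp: Finite_Cartesian_Product.norm_nth_le)
    then show "\<bar>normPQ p Q (u$k)\<bar> \<le> (\<Sum>i\<in>UNIV. \<Sum>l\<in>UNIV. \<bar>Q$i$l\<bar>) * norm u"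
      using normPQ_upper[OF assms, of Q "u$k"] by simp
  qed
  also have "\<dots> = (real CARD('N) * (\<Sum>i\<in>UNIV. \<Sum>l\<in>UNIV. \<bar>Q$i$l\<bar>)) * norm u" by simp
  finally show ?thesis .
qed

lemma powr_le_cancel_base:
  fixes a b P :: real
  assumes "0 \<le> a" "0 \<le> b" "0 < P" "a powr P \<le> b powr P" shows "a \<le> b"
proof (rule ccontr)
  assume "\<not> a \<le> b"
  then have "b powr P < a powr P" using assms by (intro powr_less_mono2) auto
  then show False using assms by simp
qed

lemma block_pow:
  fixes x :: "(real^'n)^'N"
  assumes "1 \<le> p" "p \<noteq> \<infinity>"
  shows "pnorm p (\<chi> k. pnorm p (x$k)) powr real_of_ereal p
     = (\<Sum>k\<in>UNIV. \<Sum>i\<in>UNIV. \<bar>x$k$i\<bar> powr real_of_ereal p)"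
  by (simp add: pnorm_pow[OF assms])

lemma block_contract:
  fixes y z :: "(real^'n)^'N" and Pm :: "'n \<Rightarrow> 'N \<Rightarrow> 'N \<Rightarrow> real"
  assumes p: "1 \<le> p" and nn: "\<And>i k j. 0 \<le> Pm i k j"
    and rows: "\<And>i k. (\<Sum>j\<in>UNIV. Pm i k j) = 1"
    and cols: "\<And>i j. (\<Sum>k\<in>UNIV. Pm i k j) = 1"
    and z: "\<And>k i. z$k$i = (\<Sum>j\<in>UNIV. Pm i k j * y$j$i)"
  shows "pnorm p (\<chi> k. pnorm p (z$k)) \<le> pnorm p (\<chi> k. pnorm p (y$k))"
proof (cases "p = \<infinity>")
  case True
  define M where "M = pnorm p (\<chi> k. pnorm p (y$k))"
  have yb: "\<bar>y$j$i\<bar> \<le> M" for j i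
  proof -
    have "\<bar>y$j$i\<bar> \<le> pnorm p (y$j)" by (rule pnorm_ge_comp[OF p])
    also have "\<dots> = \<bar>(\<chi> k. pnorm p (y$k))$j\<bar>" by simp
    also have "\<dots> \<le> M" unfolding M_def by (rule pnorm_ge_comp[OF p])
    finally show ?thesis .
  qed
  have zb: "\<bar>z$k$i\<bar> \<le> M" for k i
  proof -
    have "\<bar>z$k$i\<bar> \<le> (\<Sum>j\<in>UNIV. \<bar>Pm i k j * y$j$i\<bar>)" unfolding z by (rule sum_abs)
    also have "\<dots> \<le> (\<Sum>j\<in>UNIV. Pm i k j * M)"
      using nn yb by (intro sum_mono) (simp add: abs_mult mult_left_mono)
    also have "\<dots> = (\<Sum>j\<in>UNIV. Pm i k j) * M" by (rule sum_distrib_right[symmetric])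
    also have "\<dots> = M" using rows by simp
    finally show ?thesis .
  qed
  have "pnorm p (z$k) \<le> M" for k unfolding True by (rule pnorm_inf_le) (rule zb)
  then have "pnorm p (\<chi> k. pnorm p (z$k)) \<le> M" unfolding True by (intro pnorm_inf_le) simp
  then show ?thesis unfolding M_def .
next
  case False
  define P where "P = real_of_ereal p"
  have P: "1 \<le> P" using pfin[OF p False] P_def by simp
  have cv: "convex_on UNIV (\<lambda>t::real. \<bar>t\<bar> powr P)" by (rule abs_powr_convex_on[OF P])
  have jen: "\<bar>z$k$i\<bar> powr P \<le> (\<Sum>j\<in>UNIV. Pm i k j * \<bar>y$j$i\<bar> powr P)" for k i
  proof -
    have "\<bar>(\<Sum>j\<in>UNIV. Pm i k j *\<^sub>R y$j$i)\<bar> powr P \<le> (\<Sum>j\<in>UNIV. Pm i k j * \<bar>y$j$i\<bar> powr P)"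
      using convex_on_sum[OF _ _ cv, of UNIV "Pm i k" "\<lambda>j. y$j$i"] rows nn
      by simp
    then show ?thesis unfolding z by simp
  qed
  have "(\<Sum>k\<in>UNIV. \<Sum>i\<in>UNIV. \<bar>z$k$i\<bar> powr P)
        \<le> (\<Sum>k\<in>UNIV. \<Sum>i\<in>UNIV. \<Sum>j\<in>UNIV. Pm i k j * \<bar>y$j$i\<bar> powr P)"
    by (intro sum_mono jen)
  also have "\<dots> = (\<Sum>i\<in>UNIV. \<Sum>k\<in>UNIV. \<Sum>j\<in>UNIV. Pm i k j * \<bar>y$j$i\<bar> powr P)"
    by (rule sum.swap)
  also have "\<dots> = (\<Sum>i\<in>UNIV. \<Sum>j\<in>UNIV. \<Sum>k\<in>UNIV. Pm i k j * \<bar>y$j$i\<bar> powr P)"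
    by (intro sum.cong refl sum.swap)
  also have "\<dots> = (\<Sum>i\<in>UNIV. \<Sum>j\<in>UNIV. (\<Sum>k\<in>UNIV. Pm i k j) * \<bar>y$j$i\<bar> powr P)"
    by (intro sum.cong refl sum_distrib_right[symmetric])
  also have "\<dots> = (\<Sum>i\<in>UNIV. \<Sum>j\<in>UNIV. \<bar>y$j$i\<bar> powr P)"
    using cols by simp
  also have "\<dots> = (\<Sum>j\<in>UNIV. \<Sum>i\<in>UNIV. \<bar>y$j$i\<bar> powr P)"
    by (rule sum.swap)
  finally have "pnorm p (\<chi> k. pnorm p (z$k)) powr P \<le> pnorm p (\<chi> k. pnorm p (y$k)) powr P"
    unfolding block_pow[OF p False, folded P_def] .
  moreover have P0: "0 < P" using P by simp
  ultimately show ?thesis by (intro powr_le_cancel_base[OF pnorm_nonneg pnorm_nonneg P0])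
qed

lemma kron_comp:
  assumes "pos_diag D"
  shows "(kron_apply L D x)$k$i = (\<Sum>j\<in>UNIV. L$k$j * (D$i$i * x$j$i))"
  by (simp add: kron_apply_def sum_component diag_mult[OF assms])

lemma kron_diff: "kron_apply L D (x - y) = kron_apply L D x - kron_apply L D y"
  by (simp add: kron_apply_def vec_eq_iff matrix_vector_mult_diff_distrib scaleR_diff_right
      sum_subtractf)

lemma lap_contract:
  fixes L :: "real^'N^'N" and D Q :: "real^'n^'n"
  assumes p: "1 \<le> p" and D: "pos_diag D" and Q: "pos_diag Q" and L: "graph_laplacian L"
  shows "\<exists>h0>0. \<forall>h x. 0 \<le> h \<longrightarrow> h \<le> h0 \<longrightarrow>
     normPQ_block p Q (x - h *\<^sub>R kron_apply L D x) \<le> normPQ_block p Q x"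
proof -
  define S where "S = (\<Sum>i\<in>UNIV. \<Sum>k\<in>UNIV. D$i$i * \<bar>L$k$k\<bar>)"
  have Dpos: "D$i$i > 0" for i using D by (auto simp: pos_diag_def)
  have S0: "S \<ge> 0" unfolding S_def using Dpos by (intro sum_nonneg mult_nonneg_nonneg) (auto intro: less_imp_le)
  have DS: "D$i$i * \<bar>L$k$k\<bar> \<le> S" for i k
  proof -
    have "D$i$i * \<bar>L$k$k\<bar> \<le> (\<Sum>k\<in>UNIV. D$i$i * \<bar>L$k$k\<bar>)"
      by (intro member_le_sum) (auto intro!: mult_nonneg_nonneg less_imp_le[OF Dpos])
    also have "\<dots> \<le> S" unfolding S_def
      by (intro member_le_sum[of i, where f="\<lambda>i. \<Sum>k\<in>UNIV. D$i$i * \<bar>L$k$k\<bar>"] sum_nonneg)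
        (auto intro!: mult_nonneg_nonneg less_imp_le[OF Dpos])
    finally show ?thesis .
  qed
  have rowsL: "(\<Sum>j\<in>UNIV. L$k$j) = 0" for k
  proof -
    have "(L *v (\<chi> i. 1))$k = 0" using L by (simp add: graph_laplacian_def)
    then show ?thesis by (simp add: mv_comp)
  qed
  have symL: "L$k$j = L$j$k" for k j
  proof -
    have "transpose L $ j $ k = L $ j $ k" using L by (simp add: graph_laplacian_def)
    then show ?thesis by (simp add: transpose_def)
  qed
  have colsL: "(\<Sum>k\<in>UNIV. L$k$j) = 0" for j using rowsL[of j] symL by simp
  have offL: "k \<noteq> j \<Longrightarrow> L$k$j \<le> 0" for k j using L by (simp add: graph_laplacian_def)
  define h0 where "h0 = 1 / (1 + S)"
  have h0: "h0 > 0" using S0 by (simp add: h0_def)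
  show ?thesis
  proof (intro exI[of _ h0] conjI h0 allI impI)
    fix h :: real and x :: "(real^'n)^'N"
    assume h: "0 \<le> h" "h \<le> h0"
    have hS: "h * S \<le> 1"
    proof -
      have "h * S \<le> h0 * S" using h S0 by (simp add: mult_right_mono)
      also have "\<dots> \<le> 1" using S0 by (simp add: h0_def)
      finally show ?thesis .
    qed
    define Pm where "Pm = (\<lambda>i k j. (if k = j then 1 else 0) - h * D$i$i * L$k$j)"
    have nn: "0 \<le> Pm i k j" for i k j
    proof (cases "k = j")
      case True
      have "h * (D$i$i * \<bar>L$k$k\<bar>) \<le> h * S" using h DS by (simp add: mult_left_mono)
      then have "h * D$i$i * L$k$k \<le> 1" using hS h Dpos[of i]
        by (smt (verit) abs_ge_self mult_left_mono mult.assoc mult_nonneg_nonneg)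
      then show ?thesis using True by (simp add: Pm_def)
    next
      case False
      have "h * D$i$i \<ge> 0" using h Dpos[of i] by simp
      then show ?thesis using False offL[OF False] by (simp add: Pm_def mult_nonneg_nonpos)
    qed
    have rows: "(\<Sum>j\<in>UNIV. Pm i k j) = 1" for i k
      by (simp add: Pm_def sum_subtractf sum_distrib_left[symmetric] rowsL mult.assoc)
    have cols: "(\<Sum>k\<in>UNIV. Pm i k j) = 1" for i j
      by (simp add: Pm_def sum_subtractf sum_distrib_left[symmetric] colsL mult.assoc)
    define y where "y = (\<chi> j. Q *v (x$j))"
    define z where "z = (\<chi> k. Q *v ((x - h *\<^sub>R kron_apply L D x)$k))"
    have zc: "z$k$i = (\<Sum>j\<in>UNIV. Pm i k j * y$j$i)" for k i
    proof -
      have "z$k$i = Q$i$i * (x$k$i - h * (\<Sum>j\<in>UNIV. L$k$j * (D$i$i * x$j$i)))"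
        by (simp add: z_def diag_mult[OF Q] kron_comp[OF D])
      also have "\<dots> = (\<Sum>j\<in>UNIV. Pm i k j * (Q$i$i * x$j$i))"
      proof -
        have a: "(\<Sum>j\<in>UNIV. L$k$j * (D$i$i * x$j$i)) = D$i$i * (\<Sum>j\<in>UNIV. L$k$j * x$j$i)"
          by (simp add: sum_distrib_left algebra_simps)
        have "(\<Sum>j\<in>UNIV. Pm i k j * (Q$i$i * x$j$i))
           = (\<Sum>j\<in>UNIV. (if k = j then Q$i$i * x$j$i else 0) - (h * D$i$i * Q$i$i) * (L$k$j * x$j$i))"
          by (intro sum.cong) (auto simp: Pm_def algebra_simps)
        also have "\<dots> = Q$i$i * x$k$i - (h * D$i$i * Q$i$i) * (\<Sum>j\<in>UNIV. L$k$j * x$j$i)"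
          by (simp add: sum_subtractf sum_distrib_left)
        finally show ?thesis unfolding a by (simp add: algebra_simps)
      qed
      finally show ?thesis by (simp add: y_def diag_mult[OF Q])
    qed
    have "pnorm p (\<chi> k. pnorm p (z$k)) \<le> pnorm p (\<chi> k. pnorm p (y$k))"
      by (rule block_contract[OF p nn rows cols zc])
    then show "normPQ_block p Q (x - h *\<^sub>R kron_apply L D x) \<le> normPQ_block p Q x"
      by (simp add: normPQ_block_def normPQ_def y_def z_def)
  qed
qed

lemma N_lip:
  fixes F :: "real^'n \<Rightarrow> real^'n"
  assumes p: "1 \<le> p" and Q: "pos_diag Q" and L: "K-lipschitz_on V F"
  shows "\<exists>K'\<ge>0. \<forall>x\<in>V. \<forall>y\<in>V. normPQ p Q (F x - F y) \<le> K' * normPQ p Q (x - y)"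
proof -
  define C1 where "C1 = (\<Sum>i\<in>UNIV. \<Sum>l\<in>UNIV. \<bar>Q$i$l\<bar>)"
  define C2 where "C2 = (\<Sum>i\<in>UNIV. 1 / Q$i$i)"
  have C1: "C1 \<ge> 0" unfolding C1_def by (intro sum_nonneg) auto
  have K: "K \<ge> 0" using L by (rule lipschitz_on_nonneg)
  show ?thesis
  proof (intro exI[of _ "C1 * K * C2"] conjI ballI)
    have "Q$i$i > 0" for i using Q by (auto simp: pos_diag_def)
    then have "C2 \<ge> 0" unfolding C2_def by (intro sum_nonneg) (auto intro: less_imp_le)
    then show "0 \<le> C1 * K * C2" using C1 K by simp
    fix x y assume xy: "x \<in> V" "y \<in> V"
    have "normPQ p Q (F x - F y) \<le> C1 * norm (F x - F y)" unfolding C1_def by (rule normPQ_upper[OF p])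
    also have "\<dots> \<le> C1 * (K * norm (x - y))"
      using lipschitz_onD[OF L xy] C1 by (intro mult_left_mono) (auto simp: dist_norm)
    also have "\<dots> \<le> C1 * (K * (C2 * normPQ p Q (x - y)))"
      using normPQ_lower[OF p Q, of "x - y"] C1 K unfolding C2_def
      by (intro mult_left_mono) auto
    finally show "normPQ p Q (F x - F y) \<le> C1 * K * C2 * normPQ p Q (x - y)" by (simp add: mult.assoc)
  qed
qed

lemma T_eq:
  fixes A B h :: real
  assumes "h > 0" "B > 0"
  shows "(1 / h) * (A / B - 1) = (A - B) / (h * B)"
  using assms by (simp add: field_simps)

lemma T_bounds:
  fixes F :: "real^'n \<Rightarrow> real^'n"
  assumes p: "1 \<le> p" and Q: "pos_diag Q" and K: "\<forall>x\<in>V. \<forall>y\<in>V. normPQ p Q (F x - F y) \<le> K' * normPQ p Q (x - y)"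
    and xy: "x \<in> V" "y \<in> V" "x \<noteq> y" and h: "h > 0"
  shows "\<bar>(1 / h) * (normPQ p Q (x - y + h *\<^sub>R (F x - F y)) / normPQ p Q (x - y) - 1)\<bar> \<le> K'"
proof -
  define a where "a = x - y"
  define b where "b = F x - F y"
  define N where "N = normPQ p Q"
  have Na: "N a > 0" unfolding N_def a_def using normPQ_pos[OF p Q] xy by simp
  have Nb: "N b \<le> K' * N a" using K xy unfolding N_def a_def b_def by blast
  have u: "N (a + h *\<^sub>R b) \<le> N a + h * N b"
    using normPQ_triangle[OF p, of Q a "h *\<^sub>R b"] normPQ_scale[OF p, of Q h b] h unfolding N_def by simp
  have l: "N a \<le> N (a + h *\<^sub>R b) + h * N b"
    using normPQ_triangle[OF p, of Q "a + h *\<^sub>R b" "(-h) *\<^sub>R b"] normPQ_scale[OF p, of Q "-h" b] h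
    unfolding N_def by simp
  have "\<bar>N (a + h *\<^sub>R b) - N a\<bar> \<le> h * (K' * N a)"
  proof -
    have "h * N b \<le> h * (K' * N a)" using Nb h by (intro mult_left_mono) auto
    then show ?thesis using u l by (simp add: abs_le_iff)
  qed
  then have "\<bar>(N (a + h *\<^sub>R b) - N a) / (h * N a)\<bar> \<le> K'"
  proof -
    have hN: "h * N a > 0" using h Na by simp
    have "\<bar>(N (a + h *\<^sub>R b) - N a) / (h * N a)\<bar> = \<bar>N (a + h *\<^sub>R b) - N a\<bar> / (h * N a)"
      using hN by (simp add: abs_divide)
    also have "\<dots> \<le> K'" using hN \<open>\<bar>N (a + h *\<^sub>R b) - N a\<bar> \<le> h * (K' * N a)\<close>
      by (simp add: pos_divide_le_eq mult_ac)
    finally show ?thesis .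
  qed
  then show ?thesis using T_eq[OF h Na] unfolding N_def a_def b_def by simp
qed

lemma T_mono:
  fixes F :: "real^'n \<Rightarrow> real^'n"
  assumes p: "1 \<le> p" and Q: "pos_diag Q" and xy: "x \<noteq> y" and h: "0 < h1" "h1 \<le> h2"
  shows "(1 / h1) * (normPQ p Q (x - y + h1 *\<^sub>R (F x - F y)) / normPQ p Q (x - y) - 1)
       \<le> (1 / h2) * (normPQ p Q (x - y + h2 *\<^sub>R (F x - F y)) / normPQ p Q (x - y) - 1)"
proof -
  define a where "a = x - y"
  define b where "b = F x - F y"
  define N where "N = normPQ p Q"
  have Na: "N a > 0" unfolding N_def a_def using normPQ_pos[OF p Q] xy by simp
  have h2: "h2 > 0" using h by simp
  define s where "s = h1 / h2"
  have s: "0 < s" "s \<le> 1" using h by (auto simp: s_def)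
  have eq: "a + h1 *\<^sub>R b = (1 - s) *\<^sub>R a + s *\<^sub>R (a + h2 *\<^sub>R b)"
    using h2 by (simp add: s_def algebra_simps)
  have "N (a + h1 *\<^sub>R b) \<le> (1 - s) * N a + s * N (a + h2 *\<^sub>R b)"
  proof -
    have "N ((1 - s) *\<^sub>R a + s *\<^sub>R (a + h2 *\<^sub>R b)) \<le> N ((1 - s) *\<^sub>R a) + N (s *\<^sub>R (a + h2 *\<^sub>R b))"
      unfolding N_def by (rule normPQ_triangle[OF p])
    also have "\<dots> = (1 - s) * N a + s * N (a + h2 *\<^sub>R b)"
      unfolding N_def normPQ_scale[OF p] using s by simp
    finally show ?thesis unfolding eq .
  qed
  then have "N (a + h1 *\<^sub>R b) - N a \<le> s * (N (a + h2 *\<^sub>R b) - N a)" by (simp add: algebra_simps)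
  then have "(N (a + h1 *\<^sub>R b) - N a) / (h1 * N a) \<le> s * (N (a + h2 *\<^sub>R b) - N a) / (h1 * N a)"
    using h Na by (intro divide_right_mono) auto
  also have "\<dots> = (N (a + h2 *\<^sub>R b) - N a) / (h2 * N a)"
    using h Na by (simp add: s_def field_simps)
  finally show ?thesis using T_eq[OF h(1) Na] T_eq[OF h2 Na] unfolding N_def a_def b_def by simp
qed

lemma logLip_props:
  fixes F :: "real^'n \<Rightarrow> real^'n"
  assumes p: "1 \<le> p" and Q: "pos_diag Q" and L: "K-lipschitz_on V F"
    and ne: "\<exists>x\<in>V. \<exists>y\<in>V. x \<noteq> y"
  defines "phi \<equiv> (\<lambda>h. SUP xy \<in> {(x, y). x \<in> V \<and> y \<in> V \<and> x \<noteq> y}.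
        (1 / h) * (normPQ p Q (fst xy - snd xy + h *\<^sub>R (F (fst xy) - F (snd xy)))
                    / normPQ p Q (fst xy - snd xy) - 1))"
  shows "(phi \<longlongrightarrow> logLip p Q V F) (at_right 0)"
    and "\<And>h x y. h > 0 \<Longrightarrow> x \<in> V \<Longrightarrow> y \<in> V \<Longrightarrow> x \<noteq> y \<Longrightarrow>
          (1 / h) * (normPQ p Q (x - y + h *\<^sub>R (F x - F y)) / normPQ p Q (x - y) - 1) \<le> phi h"
proof -
  define S where "S = {(x, y). x \<in> V \<and> y \<in> V \<and> x \<noteq> y}"
  define f where "f = (\<lambda>h xy. (1 / h) * (normPQ p Q (fst xy - snd xy + h *\<^sub>R (F (fst xy) - F (snd xy)))
                    / normPQ p Q (fst xy - snd xy) - 1))"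
  have phi: "phi h = (SUP xy\<in>S. f h xy)" for h unfolding phi_def S_def f_def by simp
  have Sne: "S \<noteq> {}" using ne by (auto simp: S_def)
  obtain K' where K': "K' \<ge> 0" "\<forall>x\<in>V. \<forall>y\<in>V. normPQ p Q (F x - F y) \<le> K' * normPQ p Q (x - y)"
    using N_lip[OF p Q L] by blast
  have fb: "\<bar>f h xy\<bar> \<le> K'" if "h > 0" "xy \<in> S" for h xy
    using T_bounds[OF p Q K'(2), of "fst xy" "snd xy" h] that by (auto simp: S_def f_def)
  have bdd: "bdd_above (f h ` S)" if "h > 0" for h
    using fb[OF that] by (intro bdd_aboveI[of _ K']) (auto simp: abs_le_iff)
  have up: "f h xy \<le> phi h" if "h > 0" "xy \<in> S" for h xy
    unfolding phi using that bdd by (intro cSUP_upper) auto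
  then show "\<And>h x y. h > 0 \<Longrightarrow> x \<in> V \<Longrightarrow> y \<in> V \<Longrightarrow> x \<noteq> y \<Longrightarrow>
          (1 / h) * (normPQ p Q (x - y + h *\<^sub>R (F x - F y)) / normPQ p Q (x - y) - 1) \<le> phi h"
    by (auto simp: f_def S_def)
  have mono: "phi h1 \<le> phi h2" if "0 < h1" "h1 \<le> h2" for h1 h2
    unfolding phi
  proof (rule cSUP_mono[OF Sne bdd])
    show "0 < h2" using that by simp
    fix xy assume "xy \<in> S"
    moreover have "f h1 xy \<le> f h2 xy"
      using T_mono[OF p Q _ that, of "fst xy" "snd xy" F] \<open>xy \<in> S\<close> by (auto simp: S_def f_def)
    ultimately show "\<exists>m\<in>S. f h1 xy \<le> f h2 m" by blast
  qed
  obtain xy0 where xy0: "xy0 \<in> S" using Sne by blast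
  have low: "- K' \<le> phi h" if "h > 0" for h
    using fb[OF that xy0] up[OF that xy0] by (simp add: abs_le_iff)
  define c0 where "c0 = Inf (phi ` {0<..})"
  have bddb: "bdd_below (phi ` {0<..})" using low by (intro bdd_belowI[of _ "-K'"]) auto
  have lim: "(phi \<longlongrightarrow> c0) (at_right 0)"
  proof (rule order_tendstoI)
    fix a assume "a < c0"
    have "eventually (\<lambda>h. h \<in> {0<..<1}) (at_right (0::real))" by (rule eventually_at_right_real) simp
    then show "eventually (\<lambda>h. a < phi h) (at_right 0)"
    proof (rule eventually_mono)
      fix h :: real assume "h \<in> {0<..<1}"
      then have "c0 \<le> phi h" unfolding c0_def using bddb by (intro cINF_lower) auto
      then show "a < phi h" using \<open>a < c0\<close> by simp
    qed
  next
    fix b assume "c0 < b"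
    then obtain h0 where h0: "h0 > 0" "phi h0 < b" unfolding c0_def
      using cInf_lessD[of "phi ` {0<..}" b] by auto
    have "eventually (\<lambda>h. h \<in> {0<..<h0}) (at_right (0::real))" by (rule eventually_at_right_real) (rule h0)
    then show "eventually (\<lambda>h. phi h < b) (at_right 0)"
    proof (rule eventually_mono)
      fix h :: real assume "h \<in> {0<..<h0}"
      then have "phi h \<le> phi h0" using mono by auto
      then show "phi h < b" using h0 by simp
    qed
  qed
  have "logLip p Q V F = Lim (at_right 0) phi" unfolding logLip_def phi_def by simp
  also have "\<dots> = c0" by (rule tendsto_Lim[OF trivial_limit_at_right_real lim])
  finally show "(phi \<longlongrightarrow> logLip p Q V F) (at_right 0)" using lim by simp
qed

lemma dini:
  fixes psi :: "real \<Rightarrow> real"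
  assumes T: "0 \<le> T" and cont: "continuous_on {0..T} psi"
    and H: "\<And>t e. 0 \<le> t \<Longrightarrow> t < T \<Longrightarrow> e > 0 \<Longrightarrow> \<exists>d>0. \<forall>h. 0 < h \<longrightarrow> h < d \<longrightarrow> psi (t+h) \<le> psi t + h*e"
  shows "psi T \<le> psi 0"
proof (rule ccontr)
  assume "\<not> psi T \<le> psi 0"
  then have gt: "psi T > psi 0" by simp
  have Tp: "T > 0" using T gt by (cases "T = 0") auto
  define e where "e = (psi T - psi 0) / (4 * T)"
  have e: "e > 0" using gt Tp by (simp add: e_def)
  define g where "g = (\<lambda>t. psi t - psi 0 - 2 * e * t)"
  have gT: "g T > 0" using gt Tp by (simp add: g_def e_def field_simps)
  have gc: "continuous_on {0..T} g" unfolding g_def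
    by (intro continuous_intros cont)
  define S where "S = {0..T} \<inter> g -` {..0}"
  have cl: "closed S" unfolding S_def by (rule continuous_closed_preimage[OF gc]) auto
  have S0: "0 \<in> S" using T by (simp add: S_def g_def)
  have bdd: "bdd_above S" unfolding S_def by (intro bdd_aboveI[of _ T]) auto
  define s where "s = Sup S"
  have sS: "s \<in> S" unfolding s_def using closed_contains_Sup[OF _ bdd cl] S0 by auto
  then have s: "0 \<le> s" "s \<le> T" "g s \<le> 0" by (auto simp: S_def)
  have "s \<noteq> T" using s(3) gT by auto
  then have sT: "s < T" using s by simp
  obtain d where d: "d > 0" "\<And>h. 0 < h \<Longrightarrow> h < d \<Longrightarrow> psi (s+h) \<le> psi s + h*e"
    using H[OF s(1) sT e] by blast
  define h where "h = min (d/2) (T - s)"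
  have h: "0 < h" "h < d" "s + h \<le> T" using d sT by (auto simp: h_def)
  have "g (s + h) \<le> g s - e * h" using d(2)[OF h(1,2)] by (simp add: g_def algebra_simps)
  also have "\<dots> < 0" using s(3) mult_pos_pos[OF e h(1)] by simp
  finally have "s + h \<in> S" using h s by (simp add: S_def)
  then have "s + h \<le> s" unfolding s_def by (rule cSup_upper[OF _ bdd])
  then show False using h by simp
qed

lemma exp_comparison:
  fixes W :: "real \<Rightarrow> real"
  assumes T: "0 \<le> T" and cont: "continuous_on {0..T} W" and nn: "\<And>t. 0 \<le> t \<Longrightarrow> 0 \<le> W t"
    and key: "\<And>t e. 0 \<le> t \<Longrightarrow> t < T \<Longrightarrow> e > 0 \<Longrightarrow>
       \<exists>d>0. \<forall>h. 0 < h \<longrightarrow> h < d \<longrightarrow> W (t+h) \<le> W t + h * (c * W t + e)"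
  shows "W T \<le> exp (c * T) * W 0"
proof -
  define psi where "psi = (\<lambda>t. exp (- c * t) * W t)"
  have pc: "continuous_on {0..T} psi" unfolding psi_def by (intro continuous_intros cont)
  have H: "\<exists>d>0. \<forall>h. 0 < h \<longrightarrow> h < d \<longrightarrow> psi (s+h) \<le> psi s + h*e"
    if s: "0 \<le> s" "s < T" and e: "e > 0" for s e
  proof -
    define M where "M = exp (- c * s) * exp \<bar>c\<bar>"
    have M: "M > 0" by (simp add: M_def)
    define e' where "e' = e / M"
    have e': "e' > 0" using e M by (simp add: e'_def)
    obtain d where d: "d > 0" "\<And>h. 0 < h \<Longrightarrow> h < d \<Longrightarrow> W (s+h) \<le> W s + h * (c * W s + e')"
      using key[OF s e'] by blast
    show ?thesis
    proof (intro exI[of _ "min d 1"] conjI allI impI)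
      show "0 < min d 1" using d by simp
      fix h assume h: "0 < h" "h < min d 1"
      have Wh: "W (s+h) \<le> (1 + c*h) * W s + h * e'" using d(2)[of h] h by (simp add: algebra_simps)
      have ex: "exp (- c * (s + h)) = exp (- c * s) * exp (- c * h)" by (simp add: algebra_simps exp_add[symmetric])
      have a1: "exp (- c * h) * (1 + c * h) \<le> 1"
      proof -
        have "1 + c * h \<le> exp (c * h)" by (rule exp_ge_add_one_self)
        then have "exp (- c * h) * (1 + c * h) \<le> exp (- c * h) * exp (c * h)" by (simp add: mult_left_mono)
        also have "\<dots> = 1" by (simp add: exp_add[symmetric])
        finally show ?thesis .
      qed
      have a2: "exp (- c * h) \<le> exp \<bar>c\<bar>"
      proof -
        have "- c * h \<le> \<bar>c\<bar>"
        proof -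
          have "- c * h \<le> \<bar>c\<bar> * h" using h by (intro mult_right_mono) auto
          also have "\<dots> \<le> \<bar>c\<bar>" using h by (simp add: mult_left_le)
          finally show ?thesis .
        qed
        then show ?thesis by simp
      qed
      have "psi (s+h) = exp (- c * s) * (exp (- c * h) * W (s+h))" unfolding psi_def ex by (simp only: mult.assoc)
      also have "\<dots> \<le> exp (- c * s) * (exp (- c * h) * ((1 + c*h) * W s + h * e'))"
        using Wh by (intro mult_left_mono) auto
      also have "\<dots> = exp (- c * s) * ((exp (- c * h) * (1 + c*h)) * W s + exp (- c * h) * (h * e'))"
        by (simp add: algebra_simps)
      also have "\<dots> \<le> exp (- c * s) * (1 * W s + exp \<bar>c\<bar> * (h * e'))"
        using a1 a2 nn[OF s(1)] h e' by (intro mult_left_mono add_mono mult_right_mono) auto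
      also have "\<dots> = psi s + h * (M * e')" by (simp add: psi_def M_def algebra_simps)
      also have "\<dots> = psi s + h * e" using M by (simp add: e'_def)
      finally show "psi (s+h) \<le> psi s + h*e" .
    qed
  qed
  have "psi T \<le> psi 0" by (rule dini[OF T pc H])
  then have "exp (- c * T) * W T \<le> W 0" by (simp add: psi_def)
  then have "exp (c * T) * (exp (- c * T) * W T) \<le> exp (c * T) * W 0" by (simp add: mult_left_mono)
  then show ?thesis by (simp add: mult.assoc[symmetric] exp_add[symmetric])
qed

lemma NB_lipschitz:
  fixes Q :: "real^'n^'n"
  assumes p: "1 \<le> p"
  shows "(real CARD('N) * (\<Sum>i\<in>UNIV. \<Sum>l\<in>UNIV. \<bar>Q$i$l\<bar>))-lipschitz_on UNIV
          (normPQ_block p Q :: (real^'n)^'N \<Rightarrow> real)"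
proof (rule lipschitz_onI)
  show "0 \<le> real CARD('N) * (\<Sum>i\<in>UNIV. \<Sum>l\<in>UNIV. \<bar>Q$i$l\<bar>)" by (intro mult_nonneg_nonneg sum_nonneg) auto
  fix x y :: "(real^'n)^'N"
  have a: "normPQ_block p Q x \<le> normPQ_block p Q (x - y) + normPQ_block p Q y"
    using NB_triangle[OF p, of Q "x - y" y] by simp
  have b: "normPQ_block p Q y \<le> normPQ_block p Q (y - x) + normPQ_block p Q x"
    using NB_triangle[OF p, of Q "y - x" x] by simp
  have c: "normPQ_block p Q (y - x) = normPQ_block p Q (x - y)"
    using NB_scale[OF p, of Q "-1" "x - y"] by simp
  have "dist (normPQ_block p Q x) (normPQ_block p Q y) \<le> normPQ_block p Q (x - y)"
    using a b c by (simp add: dist_real_def abs_le_iff)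
  also have "\<dots> \<le> (real CARD('N) * (\<Sum>i\<in>UNIV. \<Sum>l\<in>UNIV. \<bar>Q$i$l\<bar>)) * dist x y"
    using NB_upper[OF p, of Q "x - y"] by (simp add: dist_norm)
  finally show "dist (normPQ_block p Q x) (normPQ_block p Q y) \<le> (real CARD('N) * (\<Sum>i\<in>UNIV. \<Sum>l\<in>UNIV. \<bar>Q$i$l\<bar>)) * dist x y" .
qed

lemma halfsplit: fixes a b c :: "'a::real_vector"
  shows "a + h *\<^sub>R (b - c) = (1/2) *\<^sub>R (a + (2*h) *\<^sub>R b) + (1/2) *\<^sub>R (a - (2*h) *\<^sub>R c)"
proof -
  have "(1/2) *\<^sub>R (a + (2*h) *\<^sub>R b) + (1/2) *\<^sub>R (a - (2*h) *\<^sub>R c)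
     = ((1/2) + (1/2::real)) *\<^sub>R a + h *\<^sub>R b - h *\<^sub>R c"
    by (simp only: scaleR_add_right scaleR_diff_right scaleR_scaleR scaleR_add_left) simp
  then show ?thesis by (simp add: scaleR_diff_right)
qed

theorem theorem4:
  fixes V :: "(real^'n) set" and F :: "real^'n \<Rightarrow> real^'n"
    and D Q :: "real^'n^'n" and L :: "real^'N^'N" and p :: ereal
    and u v :: "real \<Rightarrow> (real^'n)^'N"
  assumes "convex V"
    and "\<exists>K. K-lipschitz_on V F"
    and "pos_diag D"
    and "graph_laplacian L"
    and "1 \<le> p"
    and "pos_diag Q"
    and "c = logLip p Q V F"
    and "is_solution F L D V u"
    and "is_solution F L D V v"
    and "t \<ge> 0"
  shows "normPQ_block p Q (u t - v t) \<le> exp (c * t) * normPQ_block p Q (u 0 - v 0)"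
proof -
  have p: "1 \<le> p" by fact
  have D: "pos_diag D" and Q: "pos_diag Q" and Lap: "graph_laplacian L" by fact+
  obtain u' where uV: "\<And>s k. s \<ge> 0 \<Longrightarrow> u s $ k \<in> V"
    and ud: "\<And>s. s \<ge> 0 \<Longrightarrow> (u has_vector_derivative u' s) (at s within {0..})"
    and ueq: "\<And>s. s \<ge> 0 \<Longrightarrow> u' s = Ftilde F (u s) - kron_apply L D (u s)"
    using assms(8) unfolding is_solution_def by blast
  obtain v' where vV: "\<And>s k. s \<ge> 0 \<Longrightarrow> v s $ k \<in> V"
    and vd: "\<And>s. s \<ge> 0 \<Longrightarrow> (v has_vector_derivative v' s) (at s within {0..})"
    and veq: "\<And>s. s \<ge> 0 \<Longrightarrow> v' s = Ftilde F (v s) - kron_apply L D (v s)"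
    using assms(9) unfolding is_solution_def by blast
  show ?thesis
  proof (cases "\<exists>x\<in>V. \<exists>y\<in>V. x \<noteq> y")
    case False
    have "u t - v t = 0" using uV[OF assms(10)] vV[OF assms(10)] False by (auto simp: vec_eq_iff)
    then show ?thesis by (simp add: NB_zero[OF p])
  next
    case ne: True
    obtain K where Lip: "K-lipschitz_on V F" using assms(2) by blast
    define phi where "phi \<equiv> (\<lambda>h. SUP xy \<in> {(x, y). x \<in> V \<and> y \<in> V \<and> x \<noteq> y}.
        (1 / h) * (normPQ p Q (fst xy - snd xy + h *\<^sub>R (F (fst xy) - F (snd xy)))
                    / normPQ p Q (fst xy - snd xy) - 1))"
    have lim: "(phi \<longlongrightarrow> c) (at_right 0)"
      using logLip_props(1)[OF p Q Lip ne] assms(7) unfolding phi_def by simp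
    have up: "\<And>h x y. h > 0 \<Longrightarrow> x \<in> V \<Longrightarrow> y \<in> V \<Longrightarrow> x \<noteq> y \<Longrightarrow>
          (1 / h) * (normPQ p Q (x - y + h *\<^sub>R (F x - F y)) / normPQ p Q (x - y) - 1) \<le> phi h"
      using logLip_props(2)[OF p Q Lip ne] unfolding phi_def by blast
    define w where "w = (\<lambda>s. u s - v s)"
    define w' where "w' = (\<lambda>s. u' s - v' s)"
    define W where "W = (\<lambda>s. normPQ_block p Q (w s))"
    have wd: "(w has_vector_derivative w' s) (at s within {0..})" if "s \<ge> 0" for s
      unfolding w_def w'_def by (rule has_vector_derivative_diff[OF ud[OF that] vd[OF that]])
    have w'eq: "w' s = (Ftilde F (u s) - Ftilde F (v s)) - kron_apply L D (w s)" if "s \<ge> 0" for s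
      using ueq[OF that] veq[OF that] by (simp add: w'_def w_def kron_diff)
    obtain h0 where h0: "h0 > 0" and lap: "\<And>h x. 0 \<le> h \<Longrightarrow> h \<le> h0 \<Longrightarrow>
       normPQ_block p Q (x - h *\<^sub>R kron_apply L D x) \<le> normPQ_block p Q x"
      using lap_contract[OF p D Q Lap] by blast
    define CB where "CB = real CARD('N) * (\<Sum>i\<in>UNIV. \<Sum>l\<in>UNIV. \<bar>Q$i$l\<bar>)"
    have CB: "CB \<ge> 0" unfolding CB_def by (intro mult_nonneg_nonneg sum_nonneg) auto
    have NBup: "normPQ_block p Q x \<le> CB * norm x" for x :: "(real^'n)^'N"
      unfolding CB_def by (rule NB_upper[OF p])
    have key: "\<exists>d>0. \<forall>h. 0 < h \<longrightarrow> h < d \<longrightarrow> W (s+h) \<le> W s + h * (c * W s + e)"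
      if s: "0 \<le> s" and e: "e > 0" for s e
    proof -
      define e1 where "e1 = e / (2 * (W s + 1))"
      define e2 where "e2 = e / 2"
      have Ws: "W s \<ge> 0" by (simp add: W_def)
      have e1: "e1 > 0" using e Ws by (simp add: e1_def)
      have e2: "e2 > 0" using e by (simp add: e2_def)
      have e1W: "e1 * W s \<le> e / 2"
      proof -
        have "e1 * W s = (e / 2) * (W s / (W s + 1))" using Ws by (simp add: e1_def field_simps)
        also have "\<dots> \<le> (e / 2) * 1" using Ws e by (intro mult_left_mono) auto
        finally show ?thesis by simp
      qed
      have "eventually (\<lambda>H. phi H < c + e1) (at_right 0)"
        using order_tendstoD(2)[OF lim] e1 by simp
      then obtain d2 where d2: "d2 > 0" "\<And>H. 0 < H \<Longrightarrow> H < d2 \<Longrightarrow> phi H < c + e1"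
        unfolding eventually_at_right_field by auto
      define ee where "ee = e2 / (CB + 1)"
      have ee: "ee > 0" using e2 CB by (simp add: ee_def)
      have CBee: "CB * ee \<le> e2"
      proof -
        have "CB * ee = e2 * (CB / (CB + 1))" using CB by (simp add: ee_def field_simps)
        also have "\<dots> \<le> e2 * 1" using CB e2 by (intro mult_left_mono) auto
        finally show ?thesis by simp
      qed
      obtain d1 where d1: "d1 > 0" "\<And>y. y \<in> {0..} \<Longrightarrow> norm (y - s) < d1 \<Longrightarrow>
          norm (w y - w s - (y - s) *\<^sub>R w' s) \<le> ee * norm (y - s)"
        using wd[OF s] ee unfolding has_vector_derivative_def has_derivative_within_alt by blast
      show ?thesis
      proof (intro exI[of _ "min d1 (min (h0/2) (d2/2))"] conjI allI impI)
        show "0 < min d1 (min (h0/2) (d2/2))" using d1 d2 h0 by simp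
        fix h assume h: "0 < h" "h < min d1 (min (h0/2) (d2/2))"
        define R where "R = w (s+h) - w s - h *\<^sub>R w' s"
        have NR: "normPQ_block p Q R \<le> e2 * h"
        proof -
          have "norm R \<le> ee * h" using d1(2)[of "s+h"] h s by (simp add: R_def)
          then have "CB * norm R \<le> CB * (ee * h)" using CB by (intro mult_left_mono)
          also have "\<dots> \<le> e2 * h" using CBee h by (simp add: mult.assoc[symmetric] mult_right_mono)
          finally show ?thesis using NBup[of R] by simp
        qed
        define dF where "dF = Ftilde F (u s) - Ftilde F (v s)"
        define K where "K = kron_apply L D (w s)"
        have split: "w s + h *\<^sub>R w' s = (1/2) *\<^sub>R (w s + (2*h) *\<^sub>R dF) + (1/2) *\<^sub>R (w s - (2*h) *\<^sub>R K)"
          unfolding w'eq[OF s] dF_def[symmetric] K_def[symmetric] by (rule halfsplit)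
        have N1: "normPQ_block p Q (w s + (2*h) *\<^sub>R dF) \<le> (1 + (2*h) * phi (2*h)) * W s"
          unfolding W_def normPQ_block_def
        proof (rule pnorm_le_scale[OF p])
          fix k
          show "0 \<le> (\<chi> k. normPQ p Q ((w s + (2*h) *\<^sub>R dF) $ k)) $ k" by simp
          show "0 \<le> (\<chi> k. normPQ p Q (w s $ k)) $ k" by simp
          have eqk: "(w s + (2*h) *\<^sub>R dF) $ k = u s $ k - v s $ k + (2*h) *\<^sub>R (F (u s $ k) - F (v s $ k))"
            by (simp add: w_def dF_def Ftilde_def)
          show "(\<chi> k. normPQ p Q ((w s + (2*h) *\<^sub>R dF) $ k)) $ k
               \<le> (1 + (2*h) * phi (2*h)) * (\<chi> k. normPQ p Q (w s $ k)) $ k"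
          proof (cases "u s $ k = v s $ k")
            case True
            then show ?thesis by (simp only: vec_lambda_beta eqk) (simp add: w_def normPQ_zero[OF p])
          next
            case False
            define a where "a = u s $ k - v s $ k"
            define X where "X = normPQ p Q (u s $ k - v s $ k + (2*h) *\<^sub>R (F (u s $ k) - F (v s $ k)))"
            have Na: "normPQ p Q a > 0" using normPQ_pos[OF p Q] False by (simp add: a_def)
            have "(1 / (2*h)) * (X / normPQ p Q a - 1) \<le> phi (2*h)"
              using up[of "2*h" "u s $ k" "v s $ k"] h uV[OF s] vV[OF s] False
              by (simp add: X_def a_def)
            then have "X / normPQ p Q a - 1 \<le> (2*h) * phi (2*h)" using h
              by (simp add: field_simps)
            then have "X \<le> (1 + (2*h) * phi (2*h)) * normPQ p Q a" using Na
              by (simp add: field_simps)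
            then show ?thesis by (simp only: vec_lambda_beta eqk) (simp add: X_def a_def w_def)
          qed
        qed
        have N1': "normPQ_block p Q (w s + (2*h) *\<^sub>R dF) \<le> (1 + (2*h) * (c + e1)) * W s"
        proof -
          have "phi (2*h) < c + e1" using d2(2)[of "2*h"] h by simp
          then have "(1 + (2*h) * phi (2*h)) * W s \<le> (1 + (2*h) * (c + e1)) * W s"
            using h Ws by (intro mult_right_mono) auto
          then show ?thesis using N1 by simp
        qed
        have N2: "normPQ_block p Q (w s - (2*h) *\<^sub>R K) \<le> W s"
          unfolding K_def W_def using h by (intro lap) auto
        have "W (s+h) = normPQ_block p Q ((w s + h *\<^sub>R w' s) + R)" by (simp add: W_def R_def)
        also have "\<dots> \<le> normPQ_block p Q (w s + h *\<^sub>R w' s) + normPQ_block p Q R" by (rule NB_triangle[OF p])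
        also have "normPQ_block p Q (w s + h *\<^sub>R w' s)
            \<le> (1/2) * normPQ_block p Q (w s + (2*h) *\<^sub>R dF) + (1/2) * normPQ_block p Q (w s - (2*h) *\<^sub>R K)"
          unfolding split using NB_triangle[OF p] NB_scale[OF p] by (metis abs_of_nonneg le_divide_eq_1_pos zero_less_divide_1_iff zero_less_numeral order_less_imp_le)
        finally have "W (s+h) \<le> (1/2) * ((1 + (2*h) * (c + e1)) * W s) + (1/2) * W s + e2 * h"
          using N1' N2 NR by linarith
        also have "\<dots> = W s + h * (c * W s + e1 * W s + e2)" by (simp add: algebra_simps)
        also have "\<dots> \<le> W s + h * (c * W s + e)"
          using e1W h by (intro add_left_mono mult_left_mono) (auto simp: e2_def)
        finally show "W (s+h) \<le> W s + h * (c * W s + e)" .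
      qed
    qed
    have wc: "continuous_on {0..t} w"
    proof -
      have "continuous_on {0..} w"
        using wd by (intro continuous_on_vector_derivative) auto
      then show ?thesis by (rule continuous_on_subset) auto
    qed
    have Wc: "continuous_on {0..t} W"
    proof -
      have "continuous_on UNIV (normPQ_block p Q :: (real^'n)^'N \<Rightarrow> real)"
        by (rule lipschitz_on_continuous_on[OF NB_lipschitz[OF p]])
      then show ?thesis unfolding W_def using wc
        by (intro continuous_on_compose2[OF _ wc]) auto
    qed
    have "W t \<le> exp (c * t) * W 0"
    proof (rule exp_comparison[OF assms(10) Wc])
      fix s :: real assume "0 \<le> s" then show "0 \<le> W s" by (simp add: W_def)
    next
      fix s e :: real assume "0 \<le> s" "s < t" "0 < e"
      then show "\<exists>d>0. \<forall>h. 0 < h \<longrightarrow> h < d \<longrightarrow> W (s+h) \<le> W s + h * (c * W s + e)"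
        using key by blast
    qed
    then show ?thesis by (simp add: W_def w_def)
  qed
qed

end
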